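(* Let $T(n) = (3n+1)/2^{v_2(3n+1)}$ for odd $n \ge 1$. Let $n = 64a + r$ with integer $a \ge 0$ and $r \in \{1,9,17,25,33,41,49,57\}$. Then: (i) if $r \in \{1,17,33,49\}$, then $T(n) \equiv 1 \pmod 4$ (the burst continues, $L \ge 2$); (ii) if $r \in \{9,41\}$, then $T(n) \equiv 3 \pmod 4$ (so $L = 1$), $n \equiv 9 \pmod{32}$, and $T(T(n)) \equiv 3 \pmod 4$ (so $G \ge 2$), for every $a$; (iii) if $r \in \{25,57\}$, then $T(n) \equiv 3 \pmod 4$ (so $L=1$), $n \equiv 25 \pmod{32}$, and $T(T(n)) \equiv 1 \pmod 4$ (so $G = 1$), for every $a$.
   Context: $v_2$ is the $2$-adic valuation. For the orbit $n, T(n), T^2(n),\dots$ with burst indicator $X_t = \mathbf{1}[T^t(n) \equiv 1 \pmod 4]$, $L$ is the length of the burst run starting at $n$ and $G$ the length of the subsequent gap run. *)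

theory Defs
  imports "HOL-Computational_Algebra.Computational_Algebra"
begin

definition v2 :: "nat \<Rightarrow> nat" where
  "v2 m = multiplicity (2::nat) m"

definition T :: "nat \<Rightarrow> nat" where
  "T n = (3 * n + 1) div 2 ^ v2 (3 * n + 1)"

end

theory Submission
  imports Defs
begin

lemma T_eq: assumes "3*n+1 = 2^k * q" "odd q" shows "T n = q"
proof -
  have "multiplicity (2::nat) (2^k * q) = k"
    using assms(2)
  proof (induction k)
    case 0 then show ?case by (simp add: not_dvd_imp_multiplicity_0)
  next
    case (Suc k)
    have "multiplicity (2::nat) (2 * (2^k*q)) = Suc (multiplicity 2 (2^k*q))"
      by (rule multiplicity_times_same) (use Suc.prems in \<open>auto simp: odd_pos\<close>)
    then show ?case using Suc by (simp add: mult.assoc)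
  qed
  hence "v2 (3*n+1) = k" unfolding v2_def assms(1) .
  then show ?thesis unfolding T_def assms(1) by simp
qed
theorem proposition5p5:
  fixes a r n :: nat
  assumes hr: "r \<in> {1, 9, 17, 25, 33, 41, 49, 57}"
    and hn: "n = 64 * a + r"
  shows "(r \<in> {1, 17, 33, 49} \<longrightarrow> T n mod 4 = 1)
       \<and> (r \<in> {9, 41} \<longrightarrow> T n mod 4 = 3 \<and> n mod 32 = 9 \<and> T (T n) mod 4 = 3)
       \<and> (r \<in> {25, 57} \<longrightarrow> T n mod 4 = 3 \<and> n mod 32 = 25 \<and> T (T n) mod 4 = 1)"
proof -
  have c1: "T n = 48*a+1" if "r = 1" by (rule T_eq[where k=2]) (use that hn in auto)
  have c17: "T n = 48*a+13" if "r = 17" by (rule T_eq[where k=2]) (use that hn in auto)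
  have c33: "T n = 48*a+25" if "r = 33" by (rule T_eq[where k=2]) (use that hn in auto)
  have c49: "T n = 48*a+37" if "r = 49" by (rule T_eq[where k=2]) (use that hn in auto)
  have c9: "T n = 48*a+7" if "r = 9" by (rule T_eq[where k=2]) (use that hn in auto)
  have c41: "T n = 48*a+31" if "r = 41" by (rule T_eq[where k=2]) (use that hn in auto)
  have c25: "T n = 48*a+19" if "r = 25" by (rule T_eq[where k=2]) (use that hn in auto)
  have c57: "T n = 48*a+43" if "r = 57" by (rule T_eq[where k=2]) (use that hn in auto)
  have d9: "T (48*a+7) = 72*a+11" by (rule T_eq[where k=1]) auto
  have d41: "T (48*a+31) = 72*a+47" by (rule T_eq[where k=1]) auto
  have d25: "T (48*a+19) = 72*a+29" by (rule T_eq[where k=1]) auto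
  have d57: "T (48*a+43) = 72*a+65" by (rule T_eq[where k=1]) auto
  have m1: "(48*a + k) mod 4 = k mod 4" for k :: nat
    using mod_mult_self3[of "12*a" 4 k] by (simp add: ac_simps)
  have m2: "(72*a + k) mod 4 = k mod 4" for k :: nat
    using mod_mult_self3[of "18*a" 4 k] by (simp add: ac_simps)
  have m3: "(64*a + k) mod 32 = k mod 32" for k :: nat
    using mod_mult_self3[of "2*a" 32 k] by (simp add: ac_simps)
  from hr show ?thesis
    using hn c1 c17 c33 c49 c9 c41 c25 c57 d9 d41 d25 d57
    by (elim insertE emptyE) (simp_all add: m1 m2 m3 m1[of 1, simplified])
qed

end
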